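(* Let $n\ge2$. <ul> <li>If $n\equiv1,2,3\pmod 4$, then $\Gamma^k\subseteq\mathrm{Q}$ for all $k=1,2,\dots,n-1$.</li> <li>If $n\equiv0\pmod4$, then $\Gamma^k\subseteq\mathrm{Q}$ for all odd $k$ with $1\le k\le n-1$, and $\Gamma^k\subseteq\mathrm{Q}'$ for all even $k$ with $2\le k\le n-2$.</li> </ul> In particular, $\Gamma^k\subseteq\mathrm{P}$ for $1\le k\le n-1$.
   Context: Let $\mathrm{C}$ be either the real Clifford algebra $C\ell_{p,q}$ with $p+q=n$, or the complex Clifford algebra $C\ell(\mathbb{C}^n)$. It has identity $e$ and generators $e_1,\dots,e_n$ satisfying $e_ae_b+e_be_a=2\eta_{ab}e$. In the real case $\eta=\mathrm{diag}(1,\dots,1,-1,\dots,-1)$ with $p$ entries $+1$ and $q$ entries $-1$. In the complex case $\eta=I_n$. $\mathrm{C}^k$ is the grade-$k$ subspace, spanned by the products $e_{a_1}\cdots e_{a_k}$ with $a_1<\dots<a_k$. The even subspace is $\mathrm{C}^{(0)}=\bigoplus_{k\text{ even}}\mathrm{C}^k$ and the odd subspace is $\mathrm{C}^{(1)}=\bigoplus_{k\text{ odd}}\mathrm{C}^k$. The reversion $U\mapsto\tilde U$ is the linear anti-automorphism acting on $\mathrm{C}^k$ as $(-1)^{k(k-1)/2}$. For $S\subseteq\mathrm{C}$, $S^\times$ is the set of elements of $S$ invertible in $\mathrm{C}$, and $\mathrm{C}^{\times(j)}:=(\mathrm{C}^{(j)})^\times$. $\mathrm{Z}$ is the center: $\mathrm{Z}=\mathrm{C}^0$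 for $n$ even and $\mathrm{Z}=\mathrm{C}^0\oplus\mathrm{C}^n$ for $n$ odd. Define: <ul> <li>$\Gamma^k=\{T\in\mathrm{C}^\times: T\,\mathrm{C}^k\,T^{-1}\subseteq\mathrm{C}^k\}$;</li> <li>$\mathrm{P}:=\mathrm{Z}^\times(\mathrm{C}^{\times(0)}\cup\mathrm{C}^{\times(1)})=\{WT: W\in\mathrm{Z}^\times, T\in\mathrm{C}^{\times(0)}\cup\mathrm{C}^{\times(1)}\}$;</li> <li>$\mathrm{Q}:=\{T\in\mathrm{P}:\tilde TT\in\mathrm{Z}^\times\}$;</li> <li>$\mathrm{Q}':=\{T\in\mathrm{P}:\tilde TT\in(\mathrm{C}^0\oplus\mathrm{C}^n)^\times\}$.</li> </ul> *)

theory Defs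
  imports Complex_Main
begin

text \<open>Concrete model of the Clifford algebra with generators e_0,...,e_(n-1)
(indices shifted to start at 0) and diagonal metric eta i = e_i e_i.
An element is a coefficient function on index sets (blades); elements of the
algebra are those whose coefficients vanish outside subsets of {..<n}.
The basis blade for A = {a_1 < ... < a_k} is e_(a_1) ... e_(a_k).\<close>

type_synonym 'a cl = "nat set \<Rightarrow> 'a"

definition cl_carrier :: "nat \<Rightarrow> 'a::field cl set" where
  "cl_carrier n = {x. \<forall>A. \<not> A \<subseteq> {..<n} \<longrightarrow> x A = 0}"

text \<open>e_A e_B = bsign eta A B * e_(A symdiff B)\<close>
definition bsign :: "(nat \<Rightarrow> 'a::field) \<Rightarrow> nat set \<Rightarrow> nat set \<Rightarrow> 'a" where
  "bsign eta A B = (-1) ^ card {(a, b). a \<in> A \<and> b \<in> B \<and> b < a} * (\<Prod>i\<in>A \<inter> B. eta i)"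

definition cl_mul :: "nat \<Rightarrow> (nat \<Rightarrow> 'a::field) \<Rightarrow> 'a cl \<Rightarrow> 'a cl \<Rightarrow> 'a cl" where
  "cl_mul n eta x y = (\<lambda>C. \<Sum>A\<in>Pow {..<n}. \<Sum>B\<in>Pow {..<n}.
      if (A - B) \<union> (B - A) = C then x A * y B * bsign eta A B else 0)"

definition cl_one :: "'a::field cl" where
  "cl_one = (\<lambda>A. if A = {} then 1 else 0)"

definition cl_units :: "nat \<Rightarrow> (nat \<Rightarrow> 'a::field) \<Rightarrow> 'a cl set" where
  "cl_units n eta = {x \<in> cl_carrier n. \<exists>y \<in> cl_carrier n.
      cl_mul n eta x y = cl_one \<and> cl_mul n eta y x = cl_one}"

definition cl_inv :: "nat \<Rightarrow> (nat \<Rightarrow> 'a::field) \<Rightarrow> 'a cl \<Rightarrow> 'a cl" where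
  "cl_inv n eta x = (THE y. y \<in> cl_carrier n \<and> cl_mul n eta x y = cl_one \<and> cl_mul n eta y x = cl_one)"

definition cl_grade :: "nat \<Rightarrow> nat \<Rightarrow> 'a::field cl set" where
  "cl_grade n k = {x \<in> cl_carrier n. \<forall>A. card A \<noteq> k \<longrightarrow> x A = 0}"

definition cl_parity :: "nat \<Rightarrow> nat \<Rightarrow> 'a::field cl set" where
  "cl_parity n j = {x \<in> cl_carrier n. \<forall>A. card A mod 2 \<noteq> j \<longrightarrow> x A = 0}"

definition cl_scalar_pseudo :: "nat \<Rightarrow> 'a::field cl set" where
  "cl_scalar_pseudo n = {x \<in> cl_carrier n. \<forall>A. card A \<noteq> 0 \<and> card A \<noteq> n \<longrightarrow> x A = 0}"

definition cl_rev :: "'a::field cl \<Rightarrow> 'a cl" where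
  "cl_rev x = (\<lambda>A. (-1) ^ (card A * (card A - 1) div 2) * x A)"

definition cl_center :: "nat \<Rightarrow> (nat \<Rightarrow> 'a::field) \<Rightarrow> 'a cl set" where
  "cl_center n eta = {z \<in> cl_carrier n. \<forall>x \<in> cl_carrier n. cl_mul n eta z x = cl_mul n eta x z}"

definition cl_invertibles :: "nat \<Rightarrow> (nat \<Rightarrow> 'a::field) \<Rightarrow> 'a cl set \<Rightarrow> 'a cl set" where
  "cl_invertibles n eta S = S \<inter> cl_units n eta"

definition cl_Gamma :: "nat \<Rightarrow> (nat \<Rightarrow> 'a::field) \<Rightarrow> nat \<Rightarrow> 'a cl set" where
  "cl_Gamma n eta k = {T \<in> cl_units n eta. \<forall>U \<in> cl_grade n k.
      cl_mul n eta (cl_mul n eta T U) (cl_inv n eta T) \<in> cl_grade n k}"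

definition cl_P :: "nat \<Rightarrow> (nat \<Rightarrow> 'a::field) \<Rightarrow> 'a cl set" where
  "cl_P n eta = {cl_mul n eta W T | W T. W \<in> cl_invertibles n eta (cl_center n eta) \<and>
      T \<in> cl_invertibles n eta (cl_parity n 0) \<union> cl_invertibles n eta (cl_parity n 1)}"

definition cl_Q :: "nat \<Rightarrow> (nat \<Rightarrow> 'a::field) \<Rightarrow> 'a cl set" where
  "cl_Q n eta = {T \<in> cl_P n eta. cl_mul n eta (cl_rev T) T \<in> cl_invertibles n eta (cl_center n eta)}"

definition cl_Q' :: "nat \<Rightarrow> (nat \<Rightarrow> 'a::field) \<Rightarrow> 'a cl set" where
  "cl_Q' n eta = {T \<in> cl_P n eta. cl_mul n eta (cl_rev T) T \<in> cl_invertibles n eta (cl_scalar_pseudo n)}"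

definition eta_pq :: "nat \<Rightarrow> nat \<Rightarrow> real" where
  "eta_pq p i = (if i < p then 1 else -1)"

end

theory Submission
  imports Defs
begin

definition sd :: "nat set \<Rightarrow> nat set \<Rightarrow> nat set" where
  "sd A B = (A - B) \<union> (B - A)"

lemma sd_eq_iff: "sd A B = C \<longleftrightarrow> B = sd A C"
  unfolding sd_def by blast

lemma mul_eq:
  "cl_mul n eta x y C = (if C \<subseteq> {..<n} then
     (\<Sum>A\<in>Pow {..<n}. x A * y (sd A C) * bsign eta A (sd A C)) else 0)"
proof -
  have inner: "(\<Sum>B\<in>Pow {..<n}. if (A - B) \<union> (B - A) = C then x A * y B * bsign eta A B else 0)
     = (if C \<subseteq> {..<n} then x A * y (sd A C) * bsign eta A (sd A C) else 0)"
    if "A \<in> Pow {..<n}" for A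
  proof -
    have "(\<Sum>B\<in>Pow {..<n}. if (A - B) \<union> (B - A) = C then x A * y B * bsign eta A B else 0)
        = (\<Sum>B\<in>Pow {..<n}. if B = sd A C then x A * y B * bsign eta A B else 0)"
      by (rule sum.cong) (auto simp: sd_eq_iff[symmetric] sd_def)
    also have "\<dots> = (if sd A C \<in> Pow {..<n} then x A * y (sd A C) * bsign eta A (sd A C) else 0)"
      by (simp add: sum.delta')
    also have "(sd A C \<in> Pow {..<n}) = (C \<subseteq> {..<n})" using that by (auto simp: sd_def)
    finally show ?thesis .
  qed
  have "cl_mul n eta x y C = (\<Sum>A\<in>Pow {..<n}. if C \<subseteq> {..<n} then x A * y (sd A C) * bsign eta A (sd A C) else 0)"
    unfolding cl_mul_def by (rule sum.cong[OF refl]) (rule inner)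
  then show ?thesis by (cases "C \<subseteq> {..<n}") simp_all
qed

lemma sd_sd[simp]: "sd A (sd A B) = B" unfolding sd_def by blast
lemma sd_empty[simp]: "sd {} B = B" "sd B {} = B" "sd B B = {}" unfolding sd_def by blast+
lemma sd_comm: "sd A B = sd B A" unfolding sd_def by blast
lemma sd_assoc: "sd (sd A B) C = sd A (sd B C)" unfolding sd_def by blast
lemma sd_sub: "A \<subseteq> N \<Longrightarrow> B \<subseteq> N \<Longrightarrow> sd A B \<subseteq> N" unfolding sd_def by blast
lemma finite_sd: "finite A \<Longrightarrow> finite B \<Longrightarrow> finite (sd A B)" unfolding sd_def by blast

definition ninv :: "nat set \<Rightarrow> nat set \<Rightarrow> nat" where
  "ninv A B = card {(a, b). a \<in> A \<and> b \<in> B \<and> b < a}"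

lemma bsign_def': "bsign eta A B = (-1) ^ ninv A B * (\<Prod>i\<in>A \<inter> B. eta i)"
  unfolding bsign_def ninv_def ..

lemma card_sd_gen:
  fixes p :: "nat set \<Rightarrow> 'b set"
  assumes fin: "\<And>X. finite X \<Longrightarrow> finite (p X)"
    and un: "\<And>X Y. p (X \<union> Y) = p X \<union> p Y"
    and dj: "\<And>X Y. X \<inter> Y = {} \<Longrightarrow> p X \<inter> p Y = {}"
    and fA: "finite A" and fB: "finite B"
  shows "card (p (sd A B)) + 2 * card (p (A \<inter> B)) = card (p A) + card (p B)"
proof -
  have e1: "p (sd A B) = p (A - B) \<union> p (B - A)" unfolding sd_def by (rule un)
  have e2: "p A = p (A - B) \<union> p (A \<inter> B)" using un[of "A - B" "A \<inter> B"]
    by (metis Diff_partition inf_le1 Un_Diff_Int)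
  have e3: "p B = p (B - A) \<union> p (A \<inter> B)" using un[of "B - A" "A \<inter> B"]
    by (metis Un_Diff_Int inf_commute)
  have d1: "p (A - B) \<inter> p (B - A) = {}" by (rule dj) blast
  have d2: "p (A - B) \<inter> p (A \<inter> B) = {}" by (rule dj) blast
  have d3: "p (B - A) \<inter> p (A \<inter> B) = {}" by (rule dj) blast
  have c1: "card (p (sd A B)) = card (p (A - B)) + card (p (B - A))"
    unfolding e1 by (rule card_Un_disjoint) (use fin fA fB d1 in auto)
  have c2: "card (p A) = card (p (A - B)) + card (p (A \<inter> B))"
    by (subst e2, rule card_Un_disjoint) (use fin fA fB d2 in auto)
  have c3: "card (p B) = card (p (B - A)) + card (p (A \<inter> B))"
    by (subst e3, rule card_Un_disjoint) (use fin fA fB d3 in auto)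
  show ?thesis using c1 c2 c3 by simp
qed

lemma ninv_sd_left:
  assumes "finite A" "finite B" "finite Z"
  shows "ninv (sd A B) Z + 2 * ninv (A \<inter> B) Z = ninv A Z + ninv B Z"
  unfolding ninv_def
  by (rule card_sd_gen[where p="\<lambda>X. {(a, b). a \<in> X \<and> b \<in> Z \<and> b < a}", OF _ _ _ assms(1,2)])
     (auto intro: finite_subset[of _ "_ \<times> Z"] simp: assms)

lemma ninv_sd_right:
  assumes "finite A" "finite B" "finite Z"
  shows "ninv Z (sd A B) + 2 * ninv Z (A \<inter> B) = ninv Z A + ninv Z B"
  unfolding ninv_def
  by (rule card_sd_gen[where p="\<lambda>X. {(a, b). a \<in> Z \<and> b \<in> X \<and> b < a}", OF _ _ _ assms(1,2)])
     (auto intro: finite_subset[of _ "Z \<times> _"] simp: assms)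

lemma neg1_pow_2k: "(-1::'a::comm_ring_1) ^ (m + 2 * k) = (-1) ^ m"
  by (simp add: power_add power_mult)

lemma sign_sd_left:
  assumes "finite A" "finite B" "finite Z"
  shows "(-1::'a::comm_ring_1) ^ ninv (sd A B) Z = (-1) ^ ninv A Z * (-1) ^ ninv B Z"
  by (metis ninv_sd_left[OF assms] neg1_pow_2k power_add)

lemma sign_sd_right:
  assumes "finite A" "finite B" "finite Z"
  shows "(-1::'a::comm_ring_1) ^ ninv Z (sd A B) = (-1) ^ ninv Z A * (-1) ^ ninv Z B"
  by (metis ninv_sd_right[OF assms] neg1_pow_2k power_add)

lemma cocycle:
  assumes "finite X" "finite Y" "finite Z"
  shows "bsign eta X Y * bsign eta (sd X Y) Z = bsign eta Y Z * bsign eta X (sd Y Z)"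
proof -
  have p1: "(\<Prod>i\<in>X \<inter> Y. eta i) * (\<Prod>i\<in>sd X Y \<inter> Z. eta i) = (\<Prod>i\<in>(X \<inter> Y) \<union> (sd X Y \<inter> Z). eta i)"
    by (rule prod.union_disjoint[symmetric]) (use assms in \<open>auto simp: sd_def\<close>)
  have p2: "(\<Prod>i\<in>Y \<inter> Z. eta i) * (\<Prod>i\<in>X \<inter> sd Y Z. eta i) = (\<Prod>i\<in>(Y \<inter> Z) \<union> (X \<inter> sd Y Z). eta i)"
    by (rule prod.union_disjoint[symmetric]) (use assms in \<open>auto simp: sd_def\<close>)
  have se: "(X \<inter> Y) \<union> (sd X Y \<inter> Z) = (Y \<inter> Z) \<union> (X \<inter> sd Y Z)" unfolding sd_def by blast
  show ?thesis
    unfolding bsign_def' sign_sd_left[OF assms(1,2,3)] sign_sd_right[OF assms(2,3,1)]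
    using p1 p2 se by (simp add: mult_ac)
qed

lemma finite_subN: "A \<subseteq> {..<(n::nat)} \<Longrightarrow> finite A" using finite_subset[of A "{..<n}"] by simp

lemma mul_carrier[simp]: "cl_mul n eta x y \<in> cl_carrier n"
  unfolding cl_carrier_def by (auto simp: mul_eq)

lemma mul_assoc: "cl_mul n eta (cl_mul n eta x y) z = cl_mul n eta x (cl_mul n eta y z)"
proof (rule ext)
  fix D
  let ?s = "bsign eta" let ?P = "Pow {..<n}"
  show "cl_mul n eta (cl_mul n eta x y) z D = cl_mul n eta x (cl_mul n eta y z) D"
  proof (cases "D \<subseteq> {..<n}")
    case False then show ?thesis by (simp add: mul_eq)
  next
    case D: True
    have "cl_mul n eta (cl_mul n eta x y) z D =
      (\<Sum>A\<in>?P. (\<Sum>X\<in>?P. x X * y (sd X A) * ?s X (sd X A)) * z (sd A D) * ?s A (sd A D))"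
      using D by (simp add: mul_eq[of n eta x y] mul_eq[of n eta _ z])
    also have "\<dots> = (\<Sum>A\<in>?P. \<Sum>X\<in>?P. x X * y (sd X A) * ?s X (sd X A) * z (sd A D) * ?s A (sd A D))"
      by (simp add: sum_distrib_right)
    also have "\<dots> = (\<Sum>X\<in>?P. \<Sum>A\<in>?P. x X * y (sd X A) * ?s X (sd X A) * z (sd A D) * ?s A (sd A D))"
      by (rule sum.swap)
    also have "\<dots> = (\<Sum>X\<in>?P. \<Sum>Y\<in>?P. x X * y Y * ?s X Y * z (sd (sd X Y) D) * ?s (sd X Y) (sd (sd X Y) D))"
    proof (rule sum.cong[OF refl])
      fix X assume X: "X \<in> ?P"
      show "(\<Sum>A\<in>?P. x X * y (sd X A) * ?s X (sd X A) * z (sd A D) * ?s A (sd A D)) =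
        (\<Sum>Y\<in>?P. x X * y Y * ?s X Y * z (sd (sd X Y) D) * ?s (sd X Y) (sd (sd X Y) D))"
        by (rule sum.reindex_bij_witness[where i="sd X" and j="sd X"]) (use X in \<open>auto simp: sd_sub\<close>)
    qed
    also have "\<dots> = (\<Sum>X\<in>?P. \<Sum>Y\<in>?P. x X * y Y * z (sd Y (sd X D)) * ?s Y (sd Y (sd X D)) * ?s X (sd X D))"
    proof (intro sum.cong[OF refl])
      fix X Y assume X: "X \<in> ?P" and Y: "Y \<in> ?P"
      have fX: "finite X" and fY: "finite Y" using X Y finite_subN by auto
      have fW: "finite (sd Y (sd X D))" using finite_subN[OF D] fX fY by (simp add: finite_sd)
      have e1: "sd (sd X Y) D = sd Y (sd X D)" unfolding sd_def by blast
      have e2: "sd Y (sd Y (sd X D)) = sd X D" by simp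
      have "?s X Y * ?s (sd X Y) (sd Y (sd X D)) = ?s Y (sd Y (sd X D)) * ?s X (sd X D)"
        using cocycle[OF fX fY fW, of eta] e2 by simp
      then show "x X * y Y * ?s X Y * z (sd (sd X Y) D) * ?s (sd X Y) (sd (sd X Y) D) =
        x X * y Y * z (sd Y (sd X D)) * ?s Y (sd Y (sd X D)) * ?s X (sd X D)"
      proof -
        let ?W = "sd Y (sd X D)"
        have "x X * y Y * ?s X Y * z ?W * ?s (sd X Y) ?W = x X * y Y * z ?W * (?s X Y * ?s (sd X Y) ?W)"
          by (simp add: mult_ac)
        also have "\<dots> = x X * y Y * z ?W * (?s Y ?W * ?s X (sd X D))" using \<open>?s X Y * ?s (sd X Y) ?W = _\<close> by simp
        also have "\<dots> = x X * y Y * z ?W * ?s Y ?W * ?s X (sd X D)" by (simp add: mult_ac)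
        finally show ?thesis unfolding e1 .
      qed
    qed
    also have "\<dots> = (\<Sum>X\<in>?P. x X * (\<Sum>Y\<in>?P. y Y * z (sd Y (sd X D)) * ?s Y (sd Y (sd X D))) * ?s X (sd X D))"
      by (simp add: sum_distrib_left sum_distrib_right mult.assoc)
    also have "\<dots> = cl_mul n eta x (cl_mul n eta y z) D"
      using D by (simp add: mul_eq[of n eta x] mul_eq[of n eta y z] sd_sub)
    finally show ?thesis .
  qed
qed

lemma card_sd: "finite A \<Longrightarrow> finite B \<Longrightarrow> card (sd A B) + 2 * card (A \<inter> B) = card A + card B"
  using card_sd_gen[where p="\<lambda>X. X"] by auto

lemma neg1_eq: "even (x + y) \<Longrightarrow> (-1::'a::comm_ring_1) ^ x = (-1) ^ y"
  by (simp add: minus_one_power_iff)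

lemma neg1_eq_neg: "odd (x + y) \<Longrightarrow> (-1::'a::comm_ring_1) ^ x = - ((-1) ^ y)"
  by (simp add: minus_one_power_iff)

definition tri :: "nat \<Rightarrow> nat" where "tri m = m * (m - 1) div 2"

lemma tri_Suc: "tri (Suc m) = tri m + m"
proof -
  have "Suc m * m = m * (m - 1) + 2 * m" by (cases m) (simp_all add: algebra_simps)
  then show ?thesis unfolding tri_def by simp
qed

lemma tri_add: "tri (a + b) = tri a + tri b + a * b"
  by (induction b) (simp_all add: tri_Suc tri_def[of 0])

lemma tri_double: "tri (2 * c) + c = 2 * (c * c)"
proof -
  have "2 * c * (2 * c - 1) = 2 * (c * (2 * c - 1))" by simp
  then have "tri (2 * c) = c * (2 * c - 1)" unfolding tri_def by simp
  moreover have "c * (2 * c - 1) + c = 2 * (c * c)" by (cases c) (simp_all add: algebra_simps)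
  ultimately show ?thesis by simp
qed

lemma ninv_swap:
  assumes "finite A" "finite B"
  shows "ninv A B + ninv B A + card (A \<inter> B) = card A * card B"
proof -
  let ?P1 = "{(a, b). a \<in> A \<and> b \<in> B \<and> b < a}"
  let ?P2 = "{(a, b). a \<in> A \<and> b \<in> B \<and> a < b}"
  let ?P3 = "(\<lambda>a. (a, a)) ` (A \<inter> B)"
  have fAB: "finite (A \<times> B)" using assms by simp
  have u: "A \<times> B = ?P1 \<union> ?P2 \<union> ?P3" by (auto simp: linorder_neq_iff)
  have c3: "card ?P3 = card (A \<inter> B)" by (rule card_image) (auto simp: inj_on_def)
  have c2: "ninv B A = card ?P2"
  proof -
    have "?P2 = (\<lambda>(b, a). (a, b)) ` {(b, a). b \<in> B \<and> a \<in> A \<and> a < b}" by auto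
    moreover have "inj_on (\<lambda>(b, a). (a, b)) {(b, a). b \<in> B \<and> a \<in> A \<and> a < b}"
      by (auto simp: inj_on_def)
    ultimately show ?thesis unfolding ninv_def by (simp add: card_image)
  qed
  have "card (A \<times> B) = card (?P1 \<union> ?P2) + card ?P3"
    unfolding u by (rule card_Un_disjoint) (use fAB u in \<open>auto intro: finite_subset\<close>)
  also have "card (?P1 \<union> ?P2) = card ?P1 + card ?P2"
    by (rule card_Un_disjoint) (use fAB u in \<open>auto intro: finite_subset\<close>)
  finally have "card A * card B = card ?P1 + card ?P2 + card ?P3" by (simp add: card_cartesian_product)
  then show ?thesis using c2 c3 unfolding ninv_def by linarith
qed

lemma parity_aux: "S + c = tm + ab + ta + tb \<Longrightarrow> ta + tb + ab = tm + tdc + mcd \<Longrightarrow>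
   tdc + c = 2 * cc \<Longrightarrow> mcd = 2 * mc \<Longrightarrow> even (S::nat)"
proof -
  assume h: "S + c = tm + ab + ta + tb" "ta + tb + ab = tm + tdc + mcd" "tdc + c = 2 * cc" "mcd = 2 * mc"
  have "S + 2*c = (S + c) + c" by simp
  also have "\<dots> = tm + (ta + tb + ab) + c" using h(1) by (simp add: add_ac)
  also have "\<dots> = tm + (tm + tdc + mcd) + c" using h(2) by simp
  also have "\<dots> = 2*tm + (tdc + c) + mcd" by (simp add: add_ac)
  also have "\<dots> = 2*(tm+cc+mc)" using h(3) h(4) by simp
  finally have "S + 2 * c = 2 * (tm + cc + mc)" .
  then have "even (S + 2 * c)" by (metis dvd_triv_left)
  then show ?thesis by simp
qed

lemma rev_sign:
  assumes fA: "finite A" and fB: "finite B"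
  shows "(-1::'a::field) ^ tri (card (sd A B)) * bsign eta A B =
     (-1) ^ tri (card A) * (-1) ^ tri (card B) * bsign eta B A"
proof -
  let ?m = "card (sd A B)" let ?c = "card (A \<inter> B)" let ?a = "card A" let ?b = "card B"
  have e1: "?m + 2 * ?c = ?a + ?b" using card_sd[OF fA fB] .
  have e2: "ninv A B + ninv B A + ?c = ?a * ?b" using ninv_swap[OF fA fB] .
  have e3: "tri (?a + ?b) = tri ?a + tri ?b + ?a * ?b" by (rule tri_add)
  have e4: "tri (?m + 2 * ?c) = tri ?m + tri (2 * ?c) + ?m * (2 * ?c)" by (rule tri_add)
  have ev: "even ((tri ?m + ninv A B) + (tri ?a + tri ?b + ninv B A))"
    apply (rule parity_aux[where c="?c" and tm="tri ?m" and ab="?a * ?b" and ta="tri ?a" and tb="tri ?b"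
          and tdc="tri (2 * ?c)" and mcd="?m * (2 * ?c)" and cc="?c * ?c" and mc="?m * ?c"])
    using e1 e2 e3 e4 tri_double[of ?c] by (simp_all add: algebra_simps)
  have "(-1::'a) ^ (tri ?m + ninv A B) = (-1) ^ (tri ?a + tri ?b + ninv B A)"
    by (rule neg1_eq[OF ev])
  then show ?thesis unfolding bsign_def' by (simp add: power_add Int_commute mult_ac)
qed

definition hat :: "'a::field cl \<Rightarrow> 'a cl" where "hat x = (\<lambda>A. (-1) ^ card A * x A)"
definition sc :: "'a::field \<Rightarrow> 'a cl \<Rightarrow> 'a cl" where "sc c x = (\<lambda>A. c * x A)"
definition pl :: "'a::field cl \<Rightarrow> 'a cl \<Rightarrow> 'a cl" where "pl x y = (\<lambda>A. x A + y A)"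

lemma bsign_empty[simp]: "bsign eta {} C = 1" "bsign eta C {} = 1"
  unfolding bsign_def by simp_all

lemma sum_Pow_one: "(\<Sum>A\<in>Pow {..<n}. cl_one A * f A) = f {}"
proof -
  have "(\<Sum>A\<in>Pow {..<n}. cl_one A * f A) = (\<Sum>A\<in>Pow {..<(n::nat)}. if A = {} then f A else 0)"
    by (rule sum.cong) (auto simp: cl_one_def)
  also have "\<dots> = f {}" by (simp add: sum.delta')
  finally show ?thesis .
qed

lemma sd_sd2[simp]: "sd (sd A B) B = A" unfolding sd_def by blast

lemma one_mul: assumes "x \<in> cl_carrier n" shows "cl_mul n eta cl_one x = x"
proof (rule ext)
  fix C
  show "cl_mul n eta cl_one x C = x C"
  proof (cases "C \<subseteq> {..<n}")
    case False then show ?thesis using assms by (simp add: mul_eq cl_carrier_def)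
  next
    case True
    have "(\<Sum>A\<in>Pow {..<n}. cl_one A * x (sd A C) * bsign eta A (sd A C))
        = (\<Sum>A\<in>Pow {..<n}. if A = {} then x C else 0)"
      by (rule sum.cong) (auto simp: cl_one_def)
    then show ?thesis using True by (simp add: mul_eq sum.delta')
  qed
qed

lemma mul_one: assumes "x \<in> cl_carrier n" shows "cl_mul n eta x cl_one = x"
proof (rule ext)
  fix C
  show "cl_mul n eta x cl_one C = x C"
  proof (cases "C \<subseteq> {..<n}")
    case False then show ?thesis using assms by (simp add: mul_eq cl_carrier_def)
  next
    case True
    have "(\<Sum>A\<in>Pow {..<n}. x A * cl_one (sd A C) * bsign eta A (sd A C))
        = (\<Sum>A\<in>Pow {..<n}. if A = C then x A else 0)"
      by (rule sum.cong) (auto simp: cl_one_def sd_def)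
    then show ?thesis using True by (simp add: mul_eq sum.delta')
  qed
qed

lemma one_carrier[simp]: "cl_one \<in> cl_carrier n"
  unfolding cl_carrier_def cl_one_def by auto

lemma sc_mul: "cl_mul n eta (sc c x) y = sc c (cl_mul n eta x y)"
  by (rule ext) (simp add: mul_eq sc_def sum_distrib_left mult.assoc)

lemma mul_sc: "cl_mul n eta x (sc c y) = sc c (cl_mul n eta x y)"
  by (rule ext) (simp add: mul_eq sc_def sum_distrib_left mult_ac)

lemma pl_mul: "cl_mul n eta (pl x x') y = pl (cl_mul n eta x y) (cl_mul n eta x' y)"
  by (rule ext) (simp add: mul_eq pl_def sum.distrib algebra_simps)

lemma mul_pl: "cl_mul n eta x (pl y y') = pl (cl_mul n eta x y) (cl_mul n eta x y')"
  by (rule ext) (simp add: mul_eq pl_def sum.distrib algebra_simps)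

lemma sign_card_sd: "finite A \<Longrightarrow> finite C \<Longrightarrow>
   (-1::'a::comm_ring_1) ^ card C = (-1) ^ card A * (-1) ^ card (sd A C)"
proof -
  assume f: "finite A" "finite C"
  have e: "card (sd A C) + 2 * card (A \<inter> C) = card A + card C" by (rule card_sd[OF f])
  have "card C + (card A + card (sd A C)) + 2 * card (A \<inter> C) = card C + card A + (card (sd A C) + 2 * card (A \<inter> C))"
    by (simp only: add_ac)
  also have "\<dots> = 2 * (card A + card C)" unfolding e by simp
  finally have "card C + (card A + card (sd A C)) + 2 * card (A \<inter> C) = 2 * (card A + card C)" .
  then have "even (card C + (card A + card (sd A C)) + 2 * card (A \<inter> C))" by (metis dvd_triv_left)
  then have "even (card C + (card A + card (sd A C)))" by simp
  then have "(-1::'a) ^ card C = (-1) ^ (card A + card (sd A C))" by (rule neg1_eq)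
  then show ?thesis by (simp add: power_add)
qed

lemma hat_mul: "hat (cl_mul n eta x y) = cl_mul n eta (hat x) (hat y)"
proof (rule ext)
  fix C
  show "hat (cl_mul n eta x y) C = cl_mul n eta (hat x) (hat y) C"
  proof (cases "C \<subseteq> {..<n}")
    case False then show ?thesis by (simp add: mul_eq hat_def)
  next
    case True
    have "hat (cl_mul n eta x y) C = (\<Sum>A\<in>Pow {..<n}. (-1) ^ card C * (x A * y (sd A C) * bsign eta A (sd A C)))"
      using True by (simp add: hat_def mul_eq sum_distrib_left)
    also have "\<dots> = (\<Sum>A\<in>Pow {..<n}. hat x A * hat y (sd A C) * bsign eta A (sd A C))"
    proof (rule sum.cong[OF refl])
      fix A assume "A \<in> Pow {..<n}"
      then have "finite A" "finite C" using True finite_subN by auto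
      then have h: "(-1::'a)^card C = (-1)^card A * (-1)^card (sd A C)" by (rule sign_card_sd)
      show "(-1) ^ card C * (x A * y (sd A C) * bsign eta A (sd A C)) = hat x A * hat y (sd A C) * bsign eta A (sd A C)"
        unfolding hat_def h by (simp only: mult_ac)
    qed
    also have "\<dots> = cl_mul n eta (hat x) (hat y) C" using True by (simp add: mul_eq)
    finally show ?thesis .
  qed
qed

lemma rev_mul: "cl_rev (cl_mul n eta x y) = cl_mul n eta (cl_rev y) (cl_rev x)"
proof (rule ext)
  fix C
  show "cl_rev (cl_mul n eta x y) C = cl_mul n eta (cl_rev y) (cl_rev x) C"
  proof (cases "C \<subseteq> {..<n}")
    case False then show ?thesis by (simp add: mul_eq cl_rev_def)
  next
    case True
    have "cl_rev (cl_mul n eta x y) C = (\<Sum>A\<in>Pow {..<n}. (-1) ^ tri (card C) * (x A * y (sd A C) * bsign eta A (sd A C)))"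
      using True by (simp add: cl_rev_def mul_eq sum_distrib_left tri_def)
    also have "\<dots> = (\<Sum>A\<in>Pow {..<n}. cl_rev y (sd A C) * cl_rev x A * bsign eta (sd A C) A)"
    proof (rule sum.cong[OF refl])
      fix A assume "A \<in> Pow {..<n}"
      then have fA: "finite A" and fB: "finite (sd A C)" using True finite_subN finite_sd by auto
      have "(-1::'a) ^ tri (card (sd A (sd A C))) * bsign eta A (sd A C) =
          (-1) ^ tri (card A) * (-1) ^ tri (card (sd A C)) * bsign eta (sd A C) A"
        by (rule rev_sign[OF fA fB])
      then have h: "(-1::'a) ^ tri (card C) * bsign eta A (sd A C) =
          (-1) ^ tri (card A) * (-1) ^ tri (card (sd A C)) * bsign eta (sd A C) A" by simp
      show "(-1) ^ tri (card C) * (x A * y (sd A C) * bsign eta A (sd A C)) = cl_rev y (sd A C) * cl_rev x A * bsign eta (sd A C) A"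
      proof -
        have "(-1) ^ tri (card C) * (x A * y (sd A C) * bsign eta A (sd A C)) =
             x A * y (sd A C) * ((-1) ^ tri (card C) * bsign eta A (sd A C))" by (simp add: mult_ac)
        also have "\<dots> = x A * y (sd A C) * ((-1) ^ tri (card A) * (-1) ^ tri (card (sd A C)) * bsign eta (sd A C) A)"
          using h by simp
        also have "\<dots> = cl_rev y (sd A C) * cl_rev x A * bsign eta (sd A C) A"
          by (simp add: cl_rev_def tri_def mult_ac)
        finally show ?thesis .
      qed
    qed
    also have "\<dots> = (\<Sum>B\<in>Pow {..<n}. cl_rev y B * cl_rev x (sd B C) * bsign eta B (sd B C))"
      by (rule sum.reindex_bij_witness[where i="\<lambda>B. sd B C" and j="\<lambda>A. sd A C"])
         (use True in \<open>auto simp: sd_sub\<close>)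
    also have "\<dots> = cl_mul n eta (cl_rev y) (cl_rev x) C" using True by (simp add: mul_eq)
    finally show ?thesis .
  qed
qed


lemma neg1_sq: "(-1::'a::comm_ring_1)^k * ((-1)^k * x) = x"
  by (simp add: minus_one_power_iff)

lemma hat_hat[simp]: "hat (hat x) = x"
  by (rule ext) (simp only: hat_def neg1_sq)

lemma rev_rev[simp]: "cl_rev (cl_rev x) = x"
  by (rule ext) (simp only: cl_rev_def neg1_sq)

lemma hat_one[simp]: "hat cl_one = cl_one"
  by (rule ext) (simp add: hat_def cl_one_def)

lemma rev_one[simp]: "cl_rev cl_one = cl_one"
  by (rule ext) (simp add: cl_rev_def cl_one_def)

lemma hat_carrier[simp]: "x \<in> cl_carrier n \<Longrightarrow> hat x \<in> cl_carrier n"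
  by (simp add: hat_def cl_carrier_def)

lemma rev_carrier[simp]: "x \<in> cl_carrier n \<Longrightarrow> cl_rev x \<in> cl_carrier n"
  by (simp add: cl_rev_def cl_carrier_def)

lemma sc_carrier[simp]: "x \<in> cl_carrier n \<Longrightarrow> sc c x \<in> cl_carrier n"
  by (simp add: sc_def cl_carrier_def)

lemma pl_carrier[simp]: "x \<in> cl_carrier n \<Longrightarrow> y \<in> cl_carrier n \<Longrightarrow> pl x y \<in> cl_carrier n"
  by (simp add: pl_def cl_carrier_def)

lemma inv_unique:
  assumes "y \<in> cl_carrier n" "z \<in> cl_carrier n" "cl_mul n eta x y = cl_one" "cl_mul n eta z x = cl_one"
  shows "y = z"
proof -
  have "y = cl_mul n eta (cl_mul n eta z x) y" using assms by (simp add: one_mul)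
  also have "\<dots> = cl_mul n eta z (cl_mul n eta x y)" by (simp add: mul_assoc)
  also have "\<dots> = z" using assms by (simp add: mul_one)
  finally show ?thesis .
qed

lemma unit_inv:
  assumes "T \<in> cl_units n eta"
  shows "cl_inv n eta T \<in> cl_carrier n" "cl_mul n eta T (cl_inv n eta T) = cl_one"
        "cl_mul n eta (cl_inv n eta T) T = cl_one"
proof -
  obtain y where y: "y \<in> cl_carrier n" "cl_mul n eta T y = cl_one" "cl_mul n eta y T = cl_one"
    using assms unfolding cl_units_def by blast
  have "cl_inv n eta T = y" unfolding cl_inv_def
  proof (rule the_equality)
    show "y \<in> cl_carrier n \<and> cl_mul n eta T y = cl_one \<and> cl_mul n eta y T = cl_one" using y by simp
    fix z assume "z \<in> cl_carrier n \<and> cl_mul n eta T z = cl_one \<and> cl_mul n eta z T = cl_one"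
    then show "z = y" using inv_unique[of z n y eta T] y by simp
  qed
  then show "cl_inv n eta T \<in> cl_carrier n" "cl_mul n eta T (cl_inv n eta T) = cl_one"
        "cl_mul n eta (cl_inv n eta T) T = cl_one" using y by auto
qed

lemma unitI: "x \<in> cl_carrier n \<Longrightarrow> y \<in> cl_carrier n \<Longrightarrow> cl_mul n eta x y = cl_one \<Longrightarrow>
   cl_mul n eta y x = cl_one \<Longrightarrow> x \<in> cl_units n eta"
  unfolding cl_units_def by blast

lemma unit_carrier: "x \<in> cl_units n eta \<Longrightarrow> x \<in> cl_carrier n"
  unfolding cl_units_def by blast

definition bl :: "nat set \<Rightarrow> 'a::field cl" where "bl A = (\<lambda>C. if C = A then 1 else 0)"

lemma prod_eta_nz: "(\<forall>i. eta i \<noteq> (0::'a::field)) \<Longrightarrow> (\<Prod>i\<in>S. eta i) \<noteq> 0"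
  by (cases "finite S") auto

lemma bsign_nz: "(\<forall>i. eta i \<noteq> (0::'a::field)) \<Longrightarrow> bsign eta A B \<noteq> 0"
  unfolding bsign_def' using prod_eta_nz[of eta "A \<inter> B"] by simp

lemma bsign_swap:
  assumes "finite A" "finite B"
  shows "bsign eta B A = (-1::'a::field) ^ (card A * card B + card (A \<inter> B)) * bsign eta A B"
proof -
  have e: "ninv A B + ninv B A + card (A \<inter> B) = card A * card B" by (rule ninv_swap[OF assms])
  have "ninv B A + (card A * card B + card (A \<inter> B) + ninv A B) = 2 * (ninv A B + ninv B A + card (A \<inter> B))"
    unfolding e[symmetric] by simp
  then have "even (ninv B A + (card A * card B + card (A \<inter> B) + ninv A B))" by (metis dvd_triv_left)
  then have "(-1::'a) ^ ninv B A = (-1) ^ (card A * card B + card (A \<inter> B) + ninv A B)" by (rule neg1_eq)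
  then show ?thesis unfolding bsign_def' by (simp add: power_add Int_commute mult_ac)
qed

lemma sd_eq_iff2: "sd D C = A \<longleftrightarrow> D = sd A C" unfolding sd_def by blast

lemma mul_bl_right:
  assumes "A \<subseteq> {..<n}" "C \<subseteq> {..<n}"
  shows "cl_mul n eta x (bl A) C = x (sd A C) * bsign eta (sd A C) A"
proof -
  have "(\<Sum>D\<in>Pow {..<n}. x D * bl A (sd D C) * bsign eta D (sd D C)) =
     (\<Sum>D\<in>Pow {..<n}. if D = sd A C then x (sd A C) * bsign eta (sd A C) A else 0)"
    by (rule sum.cong) (auto simp: bl_def sd_eq_iff2)
  also have "\<dots> = x (sd A C) * bsign eta (sd A C) A" using assms by (simp add: sum.delta' sd_sub)
  finally show ?thesis using assms by (simp add: mul_eq)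
qed

lemma mul_bl_left:
  assumes "A \<subseteq> {..<n}" "C \<subseteq> {..<n}"
  shows "cl_mul n eta (bl A) x C = x (sd A C) * bsign eta A (sd A C)"
proof -
  have "(\<Sum>D\<in>Pow {..<n}. bl A D * x (sd D C) * bsign eta D (sd D C)) =
     (\<Sum>D\<in>Pow {..<n}. if D = A then x (sd A C) * bsign eta A (sd A C) else 0)"
    by (rule sum.cong) (auto simp: bl_def)
  also have "\<dots> = x (sd A C) * bsign eta A (sd A C)" using assms by (simp add: sum.delta')
  finally show ?thesis using assms by (simp add: mul_eq)
qed

lemma bl_grade: "A \<subseteq> {..<n} \<Longrightarrow> bl A \<in> cl_grade n (card A)"
  unfolding cl_grade_def cl_carrier_def bl_def by auto

lemma central_coef:
  fixes X :: "'a::field_char_0 cl"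
  assumes nz: "\<forall>i. eta i \<noteq> 0" and com: "cl_mul n eta X (bl A) = cl_mul n eta (bl A) X"
    and A: "A \<subseteq> {..<n}" and B: "B \<subseteq> {..<n}" and od: "odd (card A * card B + card (A \<inter> B))"
  shows "X B = 0"
proof -
  have C: "sd A B \<subseteq> {..<n}" using A B by (rule sd_sub)
  have "cl_mul n eta X (bl A) (sd A B) = cl_mul n eta (bl A) X (sd A B)" using com by simp
  then have h: "X B * bsign eta B A = X B * bsign eta A B"
    using mul_bl_right[OF A C, of eta X] mul_bl_left[OF A C, of eta X] by simp
  have fA: "finite A" and fB: "finite B" using A B finite_subN by auto
  have "(-1::'a) ^ (card A * card B + card (A \<inter> B)) = -1" using od by (simp add: minus_one_power_iff)
  then have "bsign eta B A = - bsign eta A B" using bsign_swap[OF fA fB, of eta] by simp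
  with h have "2 * (X B * bsign eta A B) = 0" by simp
  then show ?thesis using bsign_nz[OF nz, of A B] by simp
qed

lemma mk_A:
  assumes B: "B \<subseteq> {..<n}" and j: "j \<le> card B" "j \<le> k" "k - j \<le> n - card B"
  shows "\<exists>A\<subseteq>{..<n}. card A = k \<and> card (A \<inter> B) = j"
proof -
  obtain A1 where A1: "A1 \<subseteq> B" "card A1 = j" "finite A1" using obtain_subset_with_card_n[OF j(1)] by blast
  have fB: "finite B" using B finite_subN by auto
  have "card ({..<n} - B) = n - card B" using B fB by (simp add: card_Diff_subset)
  then obtain A2 where A2: "A2 \<subseteq> {..<n} - B" "card A2 = k - j" "finite A2"
    using obtain_subset_with_card_n[of "k - j" "{..<n} - B"] j(3) by auto
  have d: "A1 \<inter> A2 = {}" using A1 A2 by auto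
  have "card (A1 \<union> A2) = k" using card_Un_disjoint[OF A1(3) A2(3) d] A1 A2 j by simp
  moreover have "(A1 \<union> A2) \<inter> B = A1" using A1 A2 by auto
  moreover have "A1 \<union> A2 \<subseteq> {..<n}" using A1 A2 B by auto
  ultimately show ?thesis using A1 by metis
qed

lemma exists_A:
  assumes B: "B \<subseteq> {..<n}" and b: "0 < card B" "card B < n" and k: "1 \<le> k" "k < n"
  shows "\<exists>A\<subseteq>{..<n}. card A = k \<and> odd (k * card B + card (A \<inter> B))"
proof -
  let ?b = "card B" let ?j0 = "min k ?b"
  show ?thesis
  proof (cases "odd (k * ?b + ?j0)")
    case True
    have pre: "?j0 \<le> card B" "?j0 \<le> k" "k - ?j0 \<le> n - card B" using b k by (auto simp: min_def)
    obtain A where "A \<subseteq> {..<n}" "card A = k" "card (A \<inter> B) = ?j0"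
      using mk_A[OF B pre] by blast
    then show ?thesis using True by metis
  next
    case False
    have "?j0 \<ge> 1" using b k by simp
    then have o: "odd (k * ?b + (?j0 - 1))" using False by (cases ?j0) auto
    have pre: "?j0 - 1 \<le> card B" "?j0 - 1 \<le> k" "k - (?j0 - 1) \<le> n - card B" using b k by (auto simp: min_def)
    obtain A where "A \<subseteq> {..<n}" "card A = k" "card (A \<inter> B) = ?j0 - 1"
      using mk_A[OF B pre] by blast
    then show ?thesis using o by metis
  qed
qed

lemma centralizer:
  fixes X :: "'a::field_char_0 cl"
  assumes nz: "\<forall>i. eta i \<noteq> 0" and k: "1 \<le> k" "k < n"
    and com: "\<forall>U\<in>cl_grade n k. cl_mul n eta X U = cl_mul n eta U X"
    and B: "B \<subseteq> {..<n}" "B \<noteq> {}" "B \<noteq> {..<n}"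
  shows "X B = 0"
proof -
  have fB: "finite B" using B finite_subN by auto
  have "card B < n"
    using B(1,3) psubset_card_mono[of "{..<n}" B] by auto
  moreover have "0 < card B" using B fB by (simp add: card_gt_0_iff)
  ultimately obtain A where A: "A \<subseteq> {..<n}" "card A = k" "odd (k * card B + card (A \<inter> B))"
    using exists_A[OF B(1) _ _ k] by blast
  have "cl_mul n eta X (bl A) = cl_mul n eta (bl A) X" using com bl_grade[OF A(1)] A(2) by metis
  then show ?thesis using central_coef[OF nz _ A(1) B(1)] A by simp
qed

lemma centralizer_top:
  fixes X :: "'a::field_char_0 cl"
  assumes nz: "\<forall>i. eta i \<noteq> 0" and k: "k \<le> n" and od: "odd (k * (n - 1))"
    and com: "\<forall>U\<in>cl_grade n k. cl_mul n eta X U = cl_mul n eta U X"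
  shows "X {..<n} = 0"
proof -
  obtain A where A: "A \<subseteq> {..<n}" "card A = k" "finite A"
    using obtain_subset_with_card_n[of k "{..<n}"] k by auto
  have "cl_mul n eta X (bl A) = cl_mul n eta (bl A) X" using com bl_grade[OF A(1)] A(2) by metis
  moreover have "odd (card A * card {..<n} + card (A \<inter> {..<n}))"
  proof -
    have i: "A \<inter> {..<n} = A" using A by auto
    have "n \<ge> 1" using od by (cases n) auto
    then have "k * n + k = k * (n - 1) + 2 * k" by (cases n) (auto simp: algebra_simps)
    then show ?thesis using od A i by simp
  qed
  ultimately show ?thesis using central_coef[OF nz _ A(1), of X "{..<n}"] by simp
qed

definition sp :: "nat \<Rightarrow> 'a::field cl \<Rightarrow> bool" where
  "sp n X \<longleftrightarrow> X \<in> cl_carrier n \<and> (\<forall>B. B \<noteq> {} \<and> B \<noteq> {..<n} \<longrightarrow> X B = 0)"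

lemma mul_swap_form:
  assumes C: "C \<subseteq> {..<n}"
  shows "cl_mul n eta x y C = (\<Sum>D\<in>Pow {..<n}. x (sd D C) * y D * bsign eta (sd D C) D)"
proof -
  have "cl_mul n eta x y C = (\<Sum>A\<in>Pow {..<n}. x A * y (sd A C) * bsign eta A (sd A C))"
    using C by (simp add: mul_eq)
  also have "\<dots> = (\<Sum>D\<in>Pow {..<n}. x (sd D C) * y D * bsign eta (sd D C) D)"
    by (rule sum.reindex_bij_witness[where i="\<lambda>D. sd D C" and j="\<lambda>A. sd A C"])
       (use C in \<open>auto simp: sd_sub\<close>)
  finally show ?thesis .
qed

lemma sum_two:
  assumes n: "0 < (n::nat)" and z: "\<And>D. D \<subseteq> {..<n} \<Longrightarrow> D \<noteq> {} \<Longrightarrow> D \<noteq> {..<n} \<Longrightarrow> f D = 0"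
  shows "(\<Sum>D\<in>Pow {..<n}. f D) = f {} + f {..<n}"
proof -
  have ne: "{} \<noteq> {..<n}" using n by auto
  have "(\<Sum>D\<in>Pow {..<n}. f D) = (\<Sum>D\<in>{{}, {..<n}}. f D)"
    by (rule sum.mono_neutral_right) (use z in auto)
  also have "\<dots> = f {} + f {..<n}" using ne by simp
  finally show ?thesis .
qed

lemma sd_N_empty: "C \<subseteq> N \<Longrightarrow> sd N C = {} \<longleftrightarrow> C = N" unfolding sd_def by blast
lemma sd_N_N: "C \<subseteq> N \<Longrightarrow> sd N C = N \<longleftrightarrow> C = {}" unfolding sd_def by blast

lemma mul_sp_left:
  assumes n: "0 < n" and X: "sp n X" and C: "C \<subseteq> {..<n}"
  shows "cl_mul n eta X y C = X {} * y C + X {..<n} * y (sd {..<n} C) * bsign eta {..<n} (sd {..<n} C)"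
proof -
  have "cl_mul n eta X y C = (\<Sum>A\<in>Pow {..<n}. X A * y (sd A C) * bsign eta A (sd A C))"
    using C by (simp add: mul_eq)
  also have "\<dots> = X {} * y (sd {} C) * bsign eta {} (sd {} C) + X {..<n} * y (sd {..<n} C) * bsign eta {..<n} (sd {..<n} C)"
    by (rule sum_two[OF n]) (use X in \<open>auto simp: sp_def\<close>)
  finally show ?thesis by simp
qed

lemma mul_sp_right:
  assumes n: "0 < n" and X: "sp n X" and C: "C \<subseteq> {..<n}"
  shows "cl_mul n eta y X C = y C * X {} + y (sd {..<n} C) * X {..<n} * bsign eta (sd {..<n} C) {..<n}"
proof -
  have "cl_mul n eta y X C = (\<Sum>D\<in>Pow {..<n}. y (sd D C) * X D * bsign eta (sd D C) D)"
    using C by (rule mul_swap_form)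
  also have "\<dots> = y (sd {} C) * X {} * bsign eta (sd {} C) {} + y (sd {..<n} C) * X {..<n} * bsign eta (sd {..<n} C) {..<n}"
    by (rule sum_two[OF n]) (use X in \<open>auto simp: sp_def\<close>)
  finally show ?thesis by (simp add: sd_comm)
qed

lemma sp_mul_formula:
  assumes n: "0 < n" and P: "sp n P" and Q: "sp n Q"
  shows "cl_mul n eta P Q = (\<lambda>C. if C = {} then P {} * Q {} + P {..<n} * Q {..<n} * bsign eta {..<n} {..<n}
      else if C = {..<n} then P {} * Q {..<n} + P {..<n} * Q {} else 0)"
proof (rule ext)
  fix C
  have ne: "{} \<noteq> {..<n}" using n by auto
  show "cl_mul n eta P Q C = (if C = {} then P {} * Q {} + P {..<n} * Q {..<n} * bsign eta {..<n} {..<n}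
      else if C = {..<n} then P {} * Q {..<n} + P {..<n} * Q {} else 0)"
  proof (cases "C \<subseteq> {..<n}")
    case False
    then have "C \<noteq> {}" "C \<noteq> {..<n}" by auto
    with False show ?thesis by (simp add: mul_eq)
  next
    case True
    note f = mul_sp_left[OF n P True, of eta Q]
    show ?thesis
    proof (cases "C = {}")
      case True then show ?thesis using f ne by (simp add: sd_def)
    next
      case C0: False
      show ?thesis
      proof (cases "C = {..<n}")
        case True then show ?thesis using f ne C0 by simp
      next
        case False
        have "Q C = 0" using Q C0 False by (simp add: sp_def)
        moreover have "Q (sd {..<n} C) = 0" using Q C0 False True sd_N_empty[OF True] sd_N_N[OF True]
          by (simp add: sp_def)
        ultimately show ?thesis using f C0 False by simp
      qed
    qed
  qed
qed

lemma bsign_N_swap: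
  assumes D: "D \<subseteq> {..<n}"
  shows "bsign eta D {..<n} = (-1::'a::field) ^ ((n + 1) * card D) * bsign eta {..<n} D"
proof -
  have fD: "finite D" using D finite_subN by auto
  have "bsign eta D {..<n} = (-1::'a) ^ (card {..<n} * card D + card ({..<n} \<inter> D)) * bsign eta {..<n} D"
    by (rule bsign_swap) (use fD in auto)
  moreover have "{..<n} \<inter> D = D" using D by auto
  ultimately show ?thesis by (simp add: algebra_simps)
qed

lemma sp_central:
  assumes n: "0 < n" and od: "odd n" and X: "sp n X" and y: "y \<in> cl_carrier n"
  shows "cl_mul n eta X y = cl_mul n eta y X"
proof (rule ext)
  fix C
  show "cl_mul n eta X y C = cl_mul n eta y X C"
  proof (cases "C \<subseteq> {..<n}")
    case False then show ?thesis by (simp add: mul_eq)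
  next
    case True
    have D: "sd {..<n} C \<subseteq> {..<n}" using True by (simp add: sd_sub)
    have "even ((n + 1) * card (sd {..<n} C))" using od by simp
    then have "bsign eta (sd {..<n} C) {..<n} = bsign eta {..<n} (sd {..<n} C)"
      using bsign_N_swap[OF D, of eta] by (simp add: minus_one_power_iff)
    then show ?thesis using mul_sp_left[OF n X True, of eta y] mul_sp_right[OF n X True, of eta y]
      by (simp add: mult_ac)
  qed
qed

lemma blN_hat:
  assumes ev: "even n"
  shows "cl_mul n eta (bl {..<n}) y = cl_mul n eta (hat y) (bl {..<n})"
proof (rule ext)
  fix C
  show "cl_mul n eta (bl {..<n}) y C = cl_mul n eta (hat y) (bl {..<n}) C"
  proof (cases "C \<subseteq> {..<n}")
    case False then show ?thesis by (simp add: mul_eq)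
  next
    case True
    let ?D = "sd {..<n} C"
    have D: "?D \<subseteq> {..<n}" using True by (simp add: sd_sub)
    have s: "bsign eta ?D {..<n} = (-1::'a) ^ ((n + 1) * card ?D) * bsign eta {..<n} ?D"
      by (rule bsign_N_swap[OF D])
    have "(-1::'a) ^ card ?D * (-1) ^ ((n + 1) * card ?D) = (-1) ^ (card ?D + (n + 1) * card ?D)"
      by (simp add: power_add)
    also have "\<dots> = 1" using ev by (simp add: minus_one_power_iff)
    finally have e: "(-1::'a) ^ card ?D * (-1) ^ ((n + 1) * card ?D) = 1" .
    have "cl_mul n eta (hat y) (bl {..<n}) C = (-1) ^ card ?D * y ?D * ((-1) ^ ((n + 1) * card ?D) * bsign eta {..<n} ?D)"
      using mul_bl_right[OF _ True, of "{..<n}" eta "hat y"] s by (simp add: hat_def)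
    also have "\<dots> = ((-1) ^ card ?D * (-1) ^ ((n + 1) * card ?D)) * (y ?D * bsign eta {..<n} ?D)"
      by (simp only: mult_ac)
    also have "\<dots> = cl_mul n eta (bl {..<n}) y C"
      using e mul_bl_left[OF _ True, of "{..<n}" eta y] by simp
    finally show ?thesis by simp
  qed
qed

lemma sp_hat:
  assumes "sp n X"
  shows "sp n (hat X)" "hat X {} = X {}" "hat X {..<n} = (-1) ^ n * X {..<n}"
  using assms by (auto simp: sp_def hat_def cl_carrier_def)

lemma sp_rev:
  assumes "sp n X"
  shows "cl_rev X {..<n} = (-1) ^ tri n * X {..<n}"
  by (simp add: cl_rev_def tri_def)

lemma sp_scalar:
  assumes "sp n X" "X {..<n} = 0"
  shows "X = sc (X {}) cl_one"
proof (rule ext)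
  fix C show "X C = sc (X {}) cl_one C"
    using assms by (cases "C = {}") (auto simp: sp_def sc_def cl_one_def)
qed

lemma one_center: "cl_one \<in> cl_center n eta"
  unfolding cl_center_def by (auto simp: one_mul mul_one)

lemma sc_center: "z \<in> cl_center n eta \<Longrightarrow> sc c z \<in> cl_center n eta"
  unfolding cl_center_def by (auto simp: sc_mul mul_sc)

lemma sp_center: "0 < n \<Longrightarrow> odd n \<Longrightarrow> sp n X \<Longrightarrow> X \<in> cl_center n eta"
  unfolding cl_center_def using sp_central[of n X] by (auto simp: sp_def)

lemma grade_carrier: "U \<in> cl_grade n k \<Longrightarrow> U \<in> cl_carrier n"
  unfolding cl_grade_def by blast

lemma hat_grade: "V \<in> cl_grade n k \<Longrightarrow> hat V = sc ((-1) ^ k) V"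
  by (rule ext) (auto simp: cl_grade_def hat_def sc_def)

lemma rev_grade: "V \<in> cl_grade n k \<Longrightarrow> cl_rev V = sc ((-1) ^ tri k) V"
  by (rule ext) (auto simp: cl_grade_def cl_rev_def sc_def tri_def)

lemma sc_cancel: "sc c x = sc c y \<Longrightarrow> (c::'a::field) \<noteq> 0 \<Longrightarrow> x = y"
  unfolding sc_def by (rule ext) (metis mult_left_cancel)

lemma neg1_nz: "(-1::'a::field) ^ k \<noteq> 0" by simp

context
  fixes n :: nat and eta :: "nat \<Rightarrow> 'a::field_char_0"
begin

abbreviation cm (infixl "\<odot>" 70) where "x \<odot> y \<equiv> cl_mul n eta x y"

lemma unit_mul:
  assumes a: "a \<in> cl_units n eta" and b: "b \<in> cl_units n eta"
  shows "a \<odot> b \<in> cl_units n eta"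
proof -
  note ia = unit_inv[OF a] and ib = unit_inv[OF b]
  have ac: "a \<in> cl_carrier n" and bc: "b \<in> cl_carrier n" using a b unit_carrier by auto
  let ?ai = "cl_inv n eta a" let ?bi = "cl_inv n eta b"
  show ?thesis
  proof (rule unitI[where y="?bi \<odot> ?ai"])
    show "a \<odot> b \<in> cl_carrier n" "?bi \<odot> ?ai \<in> cl_carrier n" by simp_all
    have "a \<odot> b \<odot> (?bi \<odot> ?ai) = a \<odot> ((b \<odot> ?bi) \<odot> ?ai)" by (simp add: mul_assoc)
    also have "\<dots> = cl_one" using ia ib by (simp add: one_mul)
    finally show "a \<odot> b \<odot> (?bi \<odot> ?ai) = cl_one" .
    have "?bi \<odot> ?ai \<odot> (a \<odot> b) = ?bi \<odot> ((?ai \<odot> a) \<odot> b)" by (simp add: mul_assoc)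
    also have "\<dots> = cl_one" using ia ib bc by (simp add: one_mul)
    finally show "?bi \<odot> ?ai \<odot> (a \<odot> b) = cl_one" .
  qed
qed

lemma gamma_X:
  fixes T :: "'a cl"
  assumes T: "T \<in> cl_Gamma n eta k"
  shows "\<forall>U\<in>cl_grade n k. (cl_inv n eta T \<odot> hat T) \<odot> U = U \<odot> (cl_inv n eta T \<odot> hat T)"
proof
  fix U :: "'a cl" assume U: "U \<in> cl_grade n k"
  define Ti where "Ti = cl_inv n eta T"
  have Tu: "T \<in> cl_units n eta" using T unfolding cl_Gamma_def by blast
  note iT = unit_inv[OF Tu, folded Ti_def]
  have Tc: "T \<in> cl_carrier n" using Tu unit_carrier by blast
  have Uc: "U \<in> cl_carrier n" using U grade_carrier by blast
  have V: "T \<odot> U \<odot> Ti \<in> cl_grade n k" using T U unfolding cl_Gamma_def Ti_def by blast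
  have "sc ((-1) ^ k) (T \<odot> U \<odot> Ti) = hat (T \<odot> U \<odot> Ti)" by (rule hat_grade[OF V, symmetric])
  also have "\<dots> = sc ((-1) ^ k) (hat T \<odot> U \<odot> hat Ti)"
    by (simp add: hat_mul hat_grade[OF U] sc_mul mul_sc)
  finally have eq: "hat T \<odot> U \<odot> hat Ti = T \<odot> U \<odot> Ti" using sc_cancel neg1_nz by metis
  have hi: "hat Ti \<odot> hat T = cl_one" using iT by (metis hat_mul hat_one)
  have "(Ti \<odot> hat T) \<odot> U = Ti \<odot> ((hat T \<odot> U) \<odot> (hat Ti \<odot> hat T))"
    using hi Uc by (simp add: mul_assoc mul_one)
  also have "\<dots> = Ti \<odot> ((hat T \<odot> U \<odot> hat Ti) \<odot> hat T)" by (simp add: mul_assoc)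
  also have "\<dots> = Ti \<odot> ((T \<odot> U \<odot> Ti) \<odot> hat T)" using eq by simp
  also have "\<dots> = (Ti \<odot> T) \<odot> (U \<odot> (Ti \<odot> hat T))" by (simp add: mul_assoc)
  also have "\<dots> = U \<odot> (Ti \<odot> hat T)" using iT by (simp add: one_mul)
  finally show "(cl_inv n eta T \<odot> hat T) \<odot> U = U \<odot> (cl_inv n eta T \<odot> hat T)" unfolding Ti_def .
qed

lemma gamma_Y:
  fixes T :: "'a cl"
  assumes T: "T \<in> cl_Gamma n eta k"
  shows "\<forall>U\<in>cl_grade n k. (cl_rev T \<odot> T) \<odot> U = U \<odot> (cl_rev T \<odot> T)"
proof
  fix U :: "'a cl" assume U: "U \<in> cl_grade n k"
  define Ti where "Ti = cl_inv n eta T"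
  have Tu: "T \<in> cl_units n eta" using T unfolding cl_Gamma_def by blast
  note iT = unit_inv[OF Tu, folded Ti_def]
  have Tc: "T \<in> cl_carrier n" using Tu unit_carrier by blast
  have Uc: "U \<in> cl_carrier n" using U grade_carrier by blast
  have V: "T \<odot> U \<odot> Ti \<in> cl_grade n k" using T U unfolding cl_Gamma_def Ti_def by blast
  have "sc ((-1) ^ tri k) (T \<odot> U \<odot> Ti) = cl_rev (T \<odot> U \<odot> Ti)" by (rule rev_grade[OF V, symmetric])
  also have "\<dots> = sc ((-1) ^ tri k) (cl_rev Ti \<odot> U \<odot> cl_rev T)"
    by (simp add: rev_mul rev_grade[OF U] sc_mul mul_sc mul_assoc)
  finally have eq: "cl_rev Ti \<odot> U \<odot> cl_rev T = T \<odot> U \<odot> Ti" using sc_cancel neg1_nz by metis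
  have hi: "cl_rev T \<odot> cl_rev Ti = cl_one" using iT by (metis rev_mul rev_one)
  have "(cl_rev T \<odot> T) \<odot> U = cl_rev T \<odot> (T \<odot> U \<odot> (Ti \<odot> T))"
    using iT Tc Uc by (simp add: mul_assoc mul_one)
  also have "\<dots> = cl_rev T \<odot> ((T \<odot> U \<odot> Ti) \<odot> T)" by (simp add: mul_assoc)
  also have "\<dots> = cl_rev T \<odot> ((cl_rev Ti \<odot> U \<odot> cl_rev T) \<odot> T)" using eq by simp
  also have "\<dots> = (cl_rev T \<odot> cl_rev Ti) \<odot> (U \<odot> (cl_rev T \<odot> T))" by (simp add: mul_assoc)
  also have "\<dots> = U \<odot> (cl_rev T \<odot> T)" using hi by (simp add: one_mul)
  finally show "(cl_rev T \<odot> T) \<odot> U = U \<odot> (cl_rev T \<odot> T)" .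
qed

end

lemma sc_sc: "sc a (sc b x) = sc (a * b) x" by (simp add: sc_def mult.assoc)
lemma sc_1: "sc 1 x = x" by (simp add: sc_def)

lemma sp_one: "0 < n \<Longrightarrow> sp n cl_one" by (auto simp: sp_def cl_one_def cl_carrier_def)
lemma sp_sc: "sp n X \<Longrightarrow> sp n (sc c X)" by (auto simp: sp_def sc_def cl_carrier_def)
lemma sp_pl: "sp n X \<Longrightarrow> sp n Y \<Longrightarrow> sp n (pl X Y)" by (auto simp: sp_def pl_def cl_carrier_def)
lemma sp_blN: "sp n (bl {..<n})" by (auto simp: sp_def bl_def cl_carrier_def)

lemma sp_of_central:
  fixes X :: "'a::field_char_0 cl"
  assumes nz: "\<forall>i. eta i \<noteq> 0" and k: "1 \<le> k" "k < n" and Xc: "X \<in> cl_carrier n"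
    and com: "\<forall>U\<in>cl_grade n k. cl_mul n eta X U = cl_mul n eta U X"
  shows "sp n X"
  unfolding sp_def
proof (intro conjI allI impI)
  show "X \<in> cl_carrier n" by fact
  fix B assume B: "B \<noteq> {} \<and> B \<noteq> {..<n}"
  show "X B = 0"
  proof (cases "B \<subseteq> {..<n}")
    case True then show ?thesis using centralizer[OF nz k com True] B by blast
  next
    case False then show ?thesis using Xc by (simp add: cl_carrier_def)
  qed
qed

lemma blN_sq:
  assumes "0 < n"
  shows "cl_mul n eta (bl {..<n}) (bl {..<n}) = sc (bsign eta {..<n} {..<n}) (cl_one::'a::field cl)"
proof (rule ext)
  fix C
  have ne: "{} \<noteq> {..<n}" using assms by auto
  show "cl_mul n eta (bl {..<n}) (bl {..<n}) C = sc (bsign eta {..<n} {..<n}) (cl_one::'a cl) C"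
    unfolding sp_mul_formula[OF assms sp_blN sp_blN] using ne
    by (auto simp: bl_def sc_def cl_one_def)
qed

lemma PI:
  assumes "W \<in> cl_center n eta" "W \<in> cl_units n eta" "T' \<in> cl_parity n j" "j = 0 \<or> j = 1"
    "T' \<in> cl_units n eta" "T = cl_mul n eta W T'"
  shows "T \<in> cl_P n eta"
  unfolding cl_P_def cl_invertibles_def using assms by blast

lemma par0: fixes T :: "'a::field_char_0 cl" shows "T \<in> cl_carrier n \<Longrightarrow> hat T = T \<Longrightarrow> T \<in> cl_parity n 0"
  unfolding cl_parity_def
proof (intro CollectI conjI allI impI)
  fix A :: "nat set" assume a: "T \<in> cl_carrier n" "hat T = T" "card A mod 2 \<noteq> 0"
  have "(-1) ^ card A * T A = T A" using a by (metis hat_def)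
  moreover have "odd (card A)" using a by presburger
  ultimately show "T A = 0" by (simp add: minus_one_power_iff)
qed

lemma par1: fixes T :: "'a::field_char_0 cl" shows "T \<in> cl_carrier n \<Longrightarrow> hat T = sc (-1) T \<Longrightarrow> T \<in> cl_parity n 1"
  unfolding cl_parity_def
proof (intro CollectI conjI allI impI)
  fix A :: "nat set" assume a: "T \<in> cl_carrier n" "hat T = sc (-1) T" "card A mod 2 \<noteq> 1"
  have "(-1) ^ card A * T A = - T A" using a by (metis hat_def sc_def mult_minus1)
  moreover have "even (card A)" using a by presburger
  ultimately show "T A = 0" by (simp add: minus_one_power_iff)
qed

lemma par_sigma0: fixes T :: "'a::field_char_0 cl" shows "T \<in> cl_carrier n \<Longrightarrow> pl T (sc 1 (hat T)) \<in> cl_parity n 0"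
  by (rule par0) (auto simp: pl_def sc_def hat_def cl_carrier_def fun_eq_iff distrib_left minus_one_power_iff)

lemma par_sigma1: fixes T :: "'a::field_char_0 cl" shows "T \<in> cl_carrier n \<Longrightarrow> pl T (sc (-1) (hat T)) \<in> cl_parity n 1"
  by (rule par1) (auto simp: pl_def sc_def hat_def cl_carrier_def fun_eq_iff distrib_left minus_one_power_iff)

lemma tri_odd: "n mod 4 = 2 \<Longrightarrow> odd (tri n)"
proof -
  assume h: "n mod 4 = 2"
  define m where "m = n div 4"
  have n: "n = 4 * m + 2" using h unfolding m_def by presburger
  have "n * (n - 1) = 2 * ((2 * m + 1) * (4 * m + 1))" unfolding n by (simp add: algebra_simps)
  then have "tri n = (2 * m + 1) * (4 * m + 1)" unfolding tri_def by simp
  then show ?thesis by simp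
qed

lemma cancel_one_left:
  assumes T: "T \<in> cl_units n eta" and Z: "Z \<in> cl_carrier n" and e: "cl_mul n eta T Z = T"
  shows "Z = cl_one"
proof -
  note iT = unit_inv[OF T]
  have "Z = cl_mul n eta (cl_mul n eta (cl_inv n eta T) T) Z" using iT Z by (simp add: one_mul)
  also have "\<dots> = cl_mul n eta (cl_inv n eta T) (cl_mul n eta T Z)" by (simp add: mul_assoc)
  also have "\<dots> = cl_one" using e iT by simp
  finally show ?thesis .
qed

lemma cancel_one_right:
  assumes T: "T \<in> cl_units n eta" and Z: "Z \<in> cl_carrier n" and e: "cl_mul n eta Z T = T"
  shows "Z = cl_one"
proof -
  note iT = unit_inv[OF T]
  have "Z = cl_mul n eta Z (cl_mul n eta T (cl_inv n eta T))" using iT Z by (simp add: mul_one)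
  also have "\<dots> = cl_mul n eta (cl_mul n eta Z T) (cl_inv n eta T)" by (simp add: mul_assoc)
  also have "\<dots> = cl_one" using e iT by simp
  finally show ?thesis .
qed

lemma one_unit: "cl_one \<in> cl_units n eta"
  by (rule unitI[where y=cl_one]) (simp_all add: one_mul)

lemma gamma_P:
  fixes T :: "'a::field_char_0 cl"
  assumes nz: "\<forall>i. eta i \<noteq> 0" and n2: "2 \<le> n" and k: "1 \<le> k" "k < n"
    and T: "T \<in> cl_Gamma n eta k"
  shows "T \<in> cl_P n eta"
proof -
  define Ti where "Ti = cl_inv n eta T"
  have Tu: "T \<in> cl_units n eta" using T unfolding cl_Gamma_def by blast
  note iT = unit_inv[OF Tu, folded Ti_def]
  have Tc: "T \<in> cl_carrier n" using Tu unit_carrier by blast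
  define X where "X = cl_mul n eta Ti (hat T)"
  have com: "\<forall>U\<in>cl_grade n k. cl_mul n eta X U = cl_mul n eta U X"
    using gamma_X[OF T] unfolding X_def Ti_def .
  have spX: "sp n X" by (rule sp_of_central[OF nz k _ com]) (simp add: X_def)
  have n0: "0 < n" using n2 by simp
  have ne: "{} \<noteq> {..<n}" using n0 by auto
  have hT: "hat T = cl_mul n eta T X"
  proof -
    have "cl_mul n eta T X = cl_mul n eta (cl_mul n eta T Ti) (hat T)" unfolding X_def by (simp add: mul_assoc)
    also have "\<dots> = hat T" using iT Tc by (simp add: one_mul)
    finally show ?thesis by simp
  qed
  have "cl_mul n eta T (cl_mul n eta X (hat X)) = T"
  proof -
    have "T = hat (hat T)" by simp
    also have "\<dots> = cl_mul n eta (cl_mul n eta T X) (hat X)" by (simp add: hT hat_mul)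
    finally show ?thesis by (simp add: mul_assoc)
  qed
  then have XhX: "cl_mul n eta X (hat X) = cl_one" by (rule cancel_one_left[OF Tu, rotated]) simp
  note hXp = sp_hat[OF spX]
  note XhXf = XhX[unfolded sp_mul_formula[OF n0 spX hXp(1)]]
  have c1: "X {} * hat X {} + X {..<n} * hat X {..<n} * bsign eta {..<n} {..<n} = 1"
    using fun_cong[OF XhXf, of "{}"] by (simp add: cl_one_def)
  have c2: "X {} * hat X {..<n} + X {..<n} * hat X {} = 0"
    using fun_cong[OF XhXf, of "{..<n}"] ne by (simp add: cl_one_def)
  show ?thesis
  proof (cases "even n")
    case ev: True
    have hX: "hat X = X"
    proof (rule ext)
      fix C show "hat X C = X C"
        using spX hXp ev by (cases "C = {} \<or> C = {..<n}") (auto simp: sp_def)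
    qed
    let ?a = "X {}" let ?b = "X {..<n}"
    have c1': "?a * ?a + ?b * ?b * bsign eta {..<n} {..<n} = 1" using c1 hX by simp
    have c2': "2 * (?a * ?b) = 0" using c2 hX by (simp add: algebra_simps)
    show ?thesis
    proof (cases "?b = 0")
      case True
      have Xs: "X = sc ?a cl_one" by (rule sp_scalar[OF spX True])
      have "?a * ?a = 1" using c1' True by simp
      then have a1: "?a = 1 \<or> ?a = -1" by (simp add: square_eq_1_iff)
      obtain a where aa: "a = ?a" by blast
      have Xs': "X = sc a cl_one" using Xs aa by simp
      have "hat T = sc a T" using hT Tc by (simp add: Xs' mul_sc mul_one)
      then have hT2: "hat T = sc ?a T" using aa by simp
      have "T \<in> cl_parity n 0 \<or> T \<in> cl_parity n 1"
        using a1 hT2 Tc par0[of T n] par1[of T n] by (auto simp: sc_1)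
      then obtain j where j: "T \<in> cl_parity n j" "j = 0 \<or> j = 1" by blast
      show ?thesis
        by (rule PI[OF one_center one_unit j Tu]) (simp add: one_mul Tc)
    next
      case False
      have a0: "?a = 0" using c2' False by simp
      have Xb: "X = sc ?b (bl {..<n})"
      proof (rule ext)
        fix C show "X C = sc ?b (bl {..<n}) C"
          using spX a0 ne by (cases "C = {}"; cases "C = {..<n}") (auto simp: sp_def sc_def bl_def)
      qed
      have bb: "?b * ?b * bsign eta {..<n} {..<n} = 1" using c1' a0 by simp
      obtain b where bdef: "b = ?b" by blast
      have Xb': "X = sc b (bl {..<n})" using Xb bdef by simp
      have "cl_mul n eta (bl {..<n}) T = cl_mul n eta (hat T) (bl {..<n})" by (rule blN_hat[OF ev])
      also have "\<dots> = cl_mul n eta T (cl_mul n eta X (bl {..<n}))" by (simp add: hT mul_assoc)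
      also have "\<dots> = cl_mul n eta T (sc (?b * bsign eta {..<n} {..<n}) cl_one)"
        using bdef by (simp add: Xb' sc_mul blN_sq[OF n0] sc_sc)
      also have "\<dots> = sc (?b * bsign eta {..<n} {..<n}) T" using Tc by (simp add: mul_sc mul_one)
      finally have e: "cl_mul n eta (bl {..<n}) T = sc (?b * bsign eta {..<n} {..<n}) T" .
      have "cl_mul n eta (sc ?b (bl {..<n})) T = T"
        by (simp add: sc_mul e sc_sc mult.assoc[symmetric] bb sc_1)
      then have "sc ?b (bl {..<n}) = cl_one"
        by (rule cancel_one_right[OF Tu, rotated]) (simp add: sp_blN[unfolded sp_def])
      then have "sc ?b (bl {..<n}) {} = cl_one {}" by simp
      then show ?thesis using ne by (simp add: sc_def bl_def cl_one_def)
    qed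
  next
    case od: False
    let ?a = "X {}" let ?b = "X {..<n}"
    have hX0: "hat X {} = ?a" and hXN: "hat X {..<n} = - ?b" using hXp od by auto
    have c1': "?a * ?a - ?b * ?b * bsign eta {..<n} {..<n} = 1" using c1 hX0 hXN by simp
    define \<sigma> where "\<sigma> = (if ?a = -1 then -1 else (1::'a))"
    have ss: "\<sigma> * \<sigma> = 1" unfolding \<sigma>_def by simp
    have cnz: "1 + \<sigma> * ?a \<noteq> 0"
    proof (cases "?a = -1")
      case True then show ?thesis unfolding \<sigma>_def by simp
    next
      case False then show ?thesis unfolding \<sigma>_def by (simp add: add_eq_0_iff)
    qed
    define c where "c = 2 + 2 * \<sigma> * ?a"
    have "c = 2 * (1 + \<sigma> * ?a)" unfolding c_def by (simp add: algebra_simps)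
    then have cnz2: "c \<noteq> 0" using cnz by (metis mult_eq_0_iff zero_neq_numeral)
    define V where "V = pl cl_one (sc \<sigma> X)"
    define V' where "V' = pl cl_one (sc \<sigma> (hat X))"
    have spV: "sp n V" unfolding V_def by (intro sp_pl sp_one sp_sc spX n0)
    have spV': "sp n V'" unfolding V'_def by (intro sp_pl sp_one sp_sc hXp(1) n0)
    have V0: "V {} = 1 + \<sigma> * ?a" and VN: "V {..<n} = \<sigma> * ?b"
      unfolding V_def using ne by (simp_all add: pl_def sc_def cl_one_def)
    have V'0: "V' {} = 1 + \<sigma> * ?a" and V'N: "V' {..<n} = - (\<sigma> * ?b)"
      unfolding V'_def using ne hX0 hXN by (simp_all add: pl_def sc_def cl_one_def)
    have k1: "(1 + \<sigma> * ?a) * (1 + \<sigma> * ?a) + \<sigma> * ?b * (- (\<sigma> * ?b)) * bsign eta {..<n} {..<n} = c"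
      unfolding c_def using ss c1' by algebra
    have k2: "(1 + \<sigma> * ?a) * (- (\<sigma> * ?b)) + \<sigma> * ?b * (1 + \<sigma> * ?a) = 0" by algebra
    have k3: "(1 + \<sigma> * ?a) * (\<sigma> * ?b) + (- (\<sigma> * ?b)) * (1 + \<sigma> * ?a) = 0" by algebra
    have k4: "(1 + \<sigma> * ?a) * (1 + \<sigma> * ?a) + (- (\<sigma> * ?b)) * (\<sigma> * ?b) * bsign eta {..<n} {..<n} = c"
      unfolding c_def using ss c1' by algebra
    have VV': "cl_mul n eta V V' = sc c cl_one"
      unfolding sp_mul_formula[OF n0 spV spV'] V0 VN V'0 V'N
      using k1 k2 ne by (auto simp: fun_eq_iff sc_def cl_one_def)
    have V'V: "cl_mul n eta V' V = sc c cl_one"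
      unfolding sp_mul_formula[OF n0 spV' spV] V0 VN V'0 V'N
      using k3 k4 ne by (auto simp: fun_eq_iff sc_def cl_one_def)
    define W where "W = sc (1 / c) V'"
    have WV: "cl_mul n eta W V = cl_one" unfolding W_def using cnz2 by (simp add: sc_mul V'V sc_sc sc_1)
    have VW: "cl_mul n eta V W = cl_one" unfolding W_def using cnz2 by (simp add: mul_sc VV' sc_sc sc_1)
    have Vc: "V \<in> cl_carrier n" and Wc: "W \<in> cl_carrier n"
      using spV spV' unfolding W_def sp_def by auto
    have Vu: "V \<in> cl_units n eta" by (rule unitI[OF Vc Wc VW WV])
    have Wu: "W \<in> cl_units n eta" by (rule unitI[OF Wc Vc WV VW])
    have Wcen: "W \<in> cl_center n eta" unfolding W_def by (intro sp_center n0 od sp_sc spV')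
    have T'u: "cl_mul n eta T V \<in> cl_units n eta" by (rule unit_mul[OF Tu Vu])
    have T'e: "cl_mul n eta T V = pl T (sc \<sigma> (hat T))"
      unfolding V_def using Tc by (simp add: mul_pl mul_sc mul_one hT)
    have T'p: "cl_mul n eta T V \<in> cl_parity n (if ?a = -1 then 1 else 0)"
      unfolding T'e using par_sigma0[OF Tc] par_sigma1[OF Tc] unfolding \<sigma>_def by auto
    have TW: "T = cl_mul n eta W (cl_mul n eta T V)"
    proof -
      have "cl_mul n eta W (cl_mul n eta T V) = cl_mul n eta (cl_mul n eta W T) V" by (simp add: mul_assoc)
      also have "\<dots> = cl_mul n eta (cl_mul n eta T W) V" using Wcen Tc unfolding cl_center_def by auto
      also have "\<dots> = T" using WV Tc by (simp add: mul_assoc mul_one)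
      finally show ?thesis by simp
    qed
    show ?thesis by (rule PI[OF Wcen Wu T'p _ T'u TW]) simp
  qed
qed

lemma gamma_Q:
  fixes T :: "'a::field_char_0 cl"
  assumes nz: "\<forall>i. eta i \<noteq> 0" and n2: "2 \<le> n" and k: "1 \<le> k" "k < n"
    and T: "T \<in> cl_Gamma n eta k"
  shows "T \<in> cl_Q' n eta" "odd n \<or> odd k \<or> n mod 4 = 2 \<Longrightarrow> T \<in> cl_Q n eta"
proof -
  have TP: "T \<in> cl_P n eta" by (rule gamma_P[OF nz n2 k T])
  define Ti where "Ti = cl_inv n eta T"
  have Tu: "T \<in> cl_units n eta" using T unfolding cl_Gamma_def by blast
  note iT = unit_inv[OF Tu, folded Ti_def]
  have Tc: "T \<in> cl_carrier n" using Tu unit_carrier by blast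
  have n0: "0 < n" using n2 by simp
  have ne: "{} \<noteq> {..<n}" using n0 by auto
  have rTu: "cl_rev T \<in> cl_units n eta"
  proof (rule unitI[where y="cl_rev Ti"])
    show "cl_rev T \<in> cl_carrier n" "cl_rev Ti \<in> cl_carrier n" using Tc iT by simp_all
    show "cl_mul n eta (cl_rev T) (cl_rev Ti) = cl_one" using iT by (metis rev_mul rev_one)
    show "cl_mul n eta (cl_rev Ti) (cl_rev T) = cl_one" using iT by (metis rev_mul rev_one)
  qed
  define Y where "Y = cl_mul n eta (cl_rev T) T"
  have Yu: "Y \<in> cl_units n eta" unfolding Y_def by (rule unit_mul[OF rTu Tu])
  have com: "\<forall>U\<in>cl_grade n k. cl_mul n eta Y U = cl_mul n eta U Y"
    using gamma_Y[OF T] unfolding Y_def .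
  have spY: "sp n Y" by (rule sp_of_central[OF nz k _ com]) (simp add: Y_def)
  have "Y \<in> cl_scalar_pseudo n"
    unfolding cl_scalar_pseudo_def
  proof (intro CollectI conjI allI impI)
    show "Y \<in> cl_carrier n" using spY by (simp add: sp_def)
    fix A :: "nat set" assume A: "card A \<noteq> 0 \<and> card A \<noteq> n"
    show "Y A = 0"
    proof (cases "A \<subseteq> {..<n}")
      case True
      then have "A \<noteq> {}" "A \<noteq> {..<n}" using A by auto
      then show ?thesis using spY by (simp add: sp_def)
    next
      case False then show ?thesis using spY by (simp add: sp_def cl_carrier_def)
    qed
  qed
  then show "T \<in> cl_Q' n eta" using TP Yu unfolding cl_Q'_def cl_invertibles_def Y_def by blast
  assume cs: "odd n \<or> odd k \<or> n mod 4 = 2"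
  have "Y \<in> cl_center n eta"
  proof (cases "odd n")
    case True then show ?thesis by (rule sp_center[OF n0 _ spY])
  next
    case ev: False
    have YN: "Y {..<n} = 0"
    proof (cases "odd k")
      case True
      have od: "odd (k * (n - 1))" using True ev n0 by simp
      have kn: "k \<le> n" using k by simp
      show ?thesis by (rule centralizer_top[OF nz kn od com])
    next
      case False
      then have m: "n mod 4 = 2" using cs ev by simp
      have rY: "cl_rev Y = Y" unfolding Y_def by (simp add: rev_mul)
      have "Y {..<n} = (-1) ^ tri n * Y {..<n}" using sp_rev[OF spY] rY by simp
      then have "Y {..<n} = - Y {..<n}" using tri_odd[OF m] by simp
      then show ?thesis by simp
    qed
    have "Y = sc (Y {}) cl_one" by (rule sp_scalar[OF spY YN])
    then show ?thesis by (metis sc_center one_center)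
  qed
  then show "T \<in> cl_Q n eta" using TP Yu unfolding cl_Q_def cl_invertibles_def Y_def by blast
qed

lemma gen:
  fixes eta :: "nat \<Rightarrow> 'a::field_char_0"
  assumes nz: "\<forall>i. eta i \<noteq> 0" and n2: "2 \<le> n"
  shows "(n mod 4 \<in> {1, 2, 3} \<longrightarrow> (\<forall>k. 1 \<le> k \<and> k \<le> n - 1 \<longrightarrow> cl_Gamma n eta k \<subseteq> cl_Q n eta)) \<and>
     (n mod 4 = 0 \<longrightarrow>
        (\<forall>k. odd k \<and> 1 \<le> k \<and> k \<le> n - 1 \<longrightarrow> cl_Gamma n eta k \<subseteq> cl_Q n eta) \<and>
        (\<forall>k. even k \<and> 2 \<le> k \<and> k \<le> n - 2 \<longrightarrow> cl_Gamma n eta k \<subseteq> cl_Q' n eta)) \<and>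
     (\<forall>k. 1 \<le> k \<and> k \<le> n - 1 \<longrightarrow> cl_Gamma n eta k \<subseteq> cl_P n eta)"
proof (intro conjI impI allI subsetI)
  fix k T assume m: "n mod 4 \<in> {1, 2, 3}" and k: "1 \<le> k \<and> k \<le> n - 1" and T: "T \<in> cl_Gamma n eta k"
  have "n mod 4 = 1 \<or> n mod 4 = 2 \<or> n mod 4 = 3" using m by simp
  then have "odd n \<or> n mod 4 = 2" by presburger
  then show "T \<in> cl_Q n eta" using gamma_Q(2)[OF nz n2 _ _ T] k n2 by auto
next
  fix k T assume k: "odd k \<and> 1 \<le> k \<and> k \<le> n - 1" and T: "T \<in> cl_Gamma n eta k"
  then show "T \<in> cl_Q n eta" using gamma_Q(2)[OF nz n2 _ _ T] n2 by auto
next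
  fix k T assume k: "even k \<and> 2 \<le> k \<and> k \<le> n - 2" and T: "T \<in> cl_Gamma n eta k"
  then show "T \<in> cl_Q' n eta" using gamma_Q(1)[OF nz n2 _ _ T] n2 by auto
next
  fix k T assume k: "1 \<le> k \<and> k \<le> n - 1" and T: "T \<in> cl_Gamma n eta k"
  then show "T \<in> cl_P n eta" using gamma_P[OF nz n2 _ _ T] n2 by auto
qed

theorem mainTheorem12:
  fixes n p q :: nat
  assumes "n \<ge> 2" and "p + q = n"
  shows
   "((n mod 4 \<in> {1, 2, 3} \<longrightarrow> (\<forall>k. 1 \<le> k \<and> k \<le> n - 1 \<longrightarrow> cl_Gamma n (eta_pq p) k \<subseteq> cl_Q n (eta_pq p))) \<and>
     (n mod 4 = 0 \<longrightarrow>
        (\<forall>k. odd k \<and> 1 \<le> k \<and> k \<le> n - 1 \<longrightarrow> cl_Gamma n (eta_pq p) k \<subseteq> cl_Q n (eta_pq p)) \<and>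
        (\<forall>k. even k \<and> 2 \<le> k \<and> k \<le> n - 2 \<longrightarrow> cl_Gamma n (eta_pq p) k \<subseteq> cl_Q' n (eta_pq p))) \<and>
     (\<forall>k. 1 \<le> k \<and> k \<le> n - 1 \<longrightarrow> cl_Gamma n (eta_pq p) k \<subseteq> cl_P n (eta_pq p)))
    \<and>
    ((n mod 4 \<in> {1, 2, 3} \<longrightarrow> (\<forall>k. 1 \<le> k \<and> k \<le> n - 1 \<longrightarrow>
        cl_Gamma n (\<lambda>_. 1::complex) k \<subseteq> cl_Q n (\<lambda>_. 1::complex))) \<and>
     (n mod 4 = 0 \<longrightarrow>
        (\<forall>k. odd k \<and> 1 \<le> k \<and> k \<le> n - 1 \<longrightarrow>
           cl_Gamma n (\<lambda>_. 1::complex) k \<subseteq> cl_Q n (\<lambda>_. 1::complex)) \<and>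
        (\<forall>k. even k \<and> 2 \<le> k \<and> k \<le> n - 2 \<longrightarrow>
           cl_Gamma n (\<lambda>_. 1::complex) k \<subseteq> cl_Q' n (\<lambda>_. 1::complex))) \<and>
     (\<forall>k. 1 \<le> k \<and> k \<le> n - 1 \<longrightarrow> cl_Gamma n (\<lambda>_. 1::complex) k \<subseteq> cl_P n (\<lambda>_. 1::complex)))"
proof (rule conjI)
  have nz1: "\<forall>i. eta_pq p i \<noteq> 0" by (simp add: eta_pq_def)
  show "(n mod 4 \<in> {1, 2, 3} \<longrightarrow> (\<forall>k. 1 \<le> k \<and> k \<le> n - 1 \<longrightarrow> cl_Gamma n (eta_pq p) k \<subseteq> cl_Q n (eta_pq p))) \<and>
     (n mod 4 = 0 \<longrightarrow>
        (\<forall>k. odd k \<and> 1 \<le> k \<and> k \<le> n - 1 \<longrightarrow> cl_Gamma n (eta_pq p) k \<subseteq> cl_Q n (eta_pq p)) \<and>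
        (\<forall>k. even k \<and> 2 \<le> k \<and> k \<le> n - 2 \<longrightarrow> cl_Gamma n (eta_pq p) k \<subseteq> cl_Q' n (eta_pq p))) \<and>
     (\<forall>k. 1 \<le> k \<and> k \<le> n - 1 \<longrightarrow> cl_Gamma n (eta_pq p) k \<subseteq> cl_P n (eta_pq p))"
    by (rule gen[OF nz1 assms(1)])
  have nz2: "\<forall>i. (\<lambda>_. 1::complex) i \<noteq> 0" by simp
  show "(n mod 4 \<in> {1, 2, 3} \<longrightarrow> (\<forall>k. 1 \<le> k \<and> k \<le> n - 1 \<longrightarrow>
        cl_Gamma n (\<lambda>_. 1::complex) k \<subseteq> cl_Q n (\<lambda>_. 1::complex))) \<and>
     (n mod 4 = 0 \<longrightarrow>
        (\<forall>k. odd k \<and> 1 \<le> k \<and> k \<le> n - 1 \<longrightarrow>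
           cl_Gamma n (\<lambda>_. 1::complex) k \<subseteq> cl_Q n (\<lambda>_. 1::complex)) \<and>
        (\<forall>k. even k \<and> 2 \<le> k \<and> k \<le> n - 2 \<longrightarrow>
           cl_Gamma n (\<lambda>_. 1::complex) k \<subseteq> cl_Q' n (\<lambda>_. 1::complex))) \<and>
     (\<forall>k. 1 \<le> k \<and> k \<le> n - 1 \<longrightarrow> cl_Gamma n (\<lambda>_. 1::complex) k \<subseteq> cl_P n (\<lambda>_. 1::complex))"
    by (rule gen[OF nz2 assms(1)])
qed

end
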